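(* For every Molholes term $t$ and every list of resources $l=[l_0,\dots,l_{|l|-1}]$ (with types making the terms well-typed), \[\mathsf{First}\,(\mathit{seq}^{G}_{l}(l,t))\equiv\mathit{seq}^{G}_{l}(l,\mathit{perm}_l(|l|,\mathsf{First}\,t)),\qquad \mathsf{First}\,(\mathit{seq}^{S}_{r}(l,t))\equiv\mathit{seq}^{S}_{r}(l,\mathit{perm}_r(|l|,\mathsf{First}\,t)).\]
   Context: Host types are sets with products; $\mathit{perm}=\lambda((x,y),z).((x,z),y)$. Molholes terms: $\mathsf{Arr}\,f:\mathsf{RSF}\,A\,B$, $\mathsf{Comp}\,t_1\,t_2$ (written $t_1\ggg t_2$, left-associative unless parenthesised), $\mathsf{First}\,t:\mathsf{RSF}(A\times C)(B\times C)$, $\mathsf{Get}\,r:\mathsf{RSF}\,A(A\times B)$, $\mathsf{Set}\,r:\mathsf{RSF}(A\times B)A$ ($r=\mathsf{Ref}\,B\,n$ a resource). Notations: $\mathit{stack}(n,t)=\mathsf{First}(\cdots(\mathsf{First}\,t)\cdots)$ with $n$ applications of $\mathsf{First}$; $\mathit{perm}_l(n,t)=\mathit{stack}(n-1,\mathsf{Arr}\,\mathit{perm})\ggg\cdots\ggg\mathit{stack}(0,\mathsf{Arr}\,\mathit{perm})\ggg t$; $\mathit{perm}_r(n,t)=t\ggg\mathit{stack}(0,\mathsf{Arr}\,\mathit{perm})\ggg\cdots\ggg\mathit{stack}(n-1,\mathsf{Arr}\,\mathit{perm})$; $\mathit{seq}^G_l(l,t)=\mathsf{Get}\,l_0\ggg(\cdots\ggg(\mathsf{Get}\,l_{|l|-1}\ggg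 t)\cdots)$; $\mathit{seq}^S_r(l,t)=t\ggg\mathsf{Set}\,l_{|l|-1}\ggg\cdots\ggg\mathsf{Set}\,l_0$. Semantics: a memory is a partial map from $\mathbb N$ to cells $\mathsf{Cell}(s,\tau)\,x$ ($s\in\{\mathsf{Internal},\mathsf{Input}\,b,\mathsf{Output}\,b\}$, $x$ a value of $\tau$ or $\mathsf{undef}$). For $r=\mathsf{Ref}\,A\,n$: $\mathrm{read}\,r\,\sigma=(x,\sigma)$ if $\sigma n=\mathsf{Cell}(\mathsf{Internal},A)x$; $=(x,\sigma[n\mapsto\mathsf{Cell}(\mathsf{Input}\,\mathrm{false},A)\mathsf{undef}])$ if $\sigma n=\mathsf{Cell}(\mathsf{Input}\,\mathrm{true},A)x$; else undefined. $\mathrm{write}\,r\,\sigma\,v=\sigma[n\mapsto\mathsf{Cell}(\mathsf{Internal},A)v]$ if $\sigma n=\mathsf{Cell}(\mathsf{Internal},A)x$; $=\sigma[n\mapsto\mathsf{Cell}(\mathsf{Output}\,\mathrm{false},A)v]$ if $\sigma n=\mathsf{Cell}(\mathsf{Output}\,\mathrm{true},A)\mathsf{undef}$; else undefined. $\mathrm{step}\,t:A\to(\text{memory}\rightharpoonup B\times\text{memory})$: $\mathsf{Arr}\,f\mapsto\lambda x\sigma.(fx,\sigma)$; $\mathsf{Comp}\,t_1t_2\mapsto\lambda x\sigma.\mathrm{step}\,t_2\,y\,\sigma'$ with $(y,\sigma')=\mathrm{step}\,t_1\,x\,\sigma$; $\mathsf{First}\,t\mapsto\lambda(x,c)\sigma.((y,c),\sigma')$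 with $(y,\sigma')=\mathrm{step}\,t\,x\,\sigma$; $\mathsf{Get}\,r\mapsto\lambda x\sigma.((x,y),\sigma')$ with $(y,\sigma')=\mathrm{read}\,r\,\sigma$; $\mathsf{Set}\,r\mapsto\lambda(x,y)\sigma.(x,\mathrm{write}\,r\,\sigma\,y)$ (all partial). $t\equiv t'$ iff $\mathrm{step}\,t=\mathrm{step}\,t'$ as partial functions. *)

theory Defs
  imports Main
begin

datatype 'b val = Atom 'b | VPair "'b val" "'b val"

datatype 'b ty = TBase "'b set" | TProd "'b ty" "'b ty"

fun has_ty :: "'b val \<Rightarrow> 'b ty \<Rightarrow> bool" where
  "has_ty (Atom a) (TBase S) = (a \<in> S)"
| "has_ty (VPair x y) (TProd A B) = (has_ty x A \<and> has_ty y B)"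
| "has_ty _ _ = False"

datatype 'b resource = Ref "'b ty" nat

datatype status = Internal | Input bool | Output bool

text \<open>A cell: status, type, and contents (None = undef).\<close>
datatype 'b cell = Cell status "'b ty" "'b val option"

type_synonym 'b memory = "nat \<Rightarrow> 'b cell option"

definition wf_mem :: "'b memory \<Rightarrow> bool" where
  "wf_mem \<sigma> \<longleftrightarrow> (\<forall>n s \<tau> x. \<sigma> n = Some (Cell s \<tau> (Some x)) \<longrightarrow> has_ty x \<tau>)"

datatype 'b rsf =
    Arr "'b val \<Rightarrow> 'b val"
  | Comp "'b rsf" "'b rsf"
  | First "'b rsf"
  | Get "'b resource"
  | Set "'b resource"

inductive wt :: "'b rsf \<Rightarrow> 'b ty \<Rightarrow> 'b ty \<Rightarrow> bool" where
  wt_Arr: "(\<And>v. has_ty v A \<Longrightarrow> has_ty (f v) B) \<Longrightarrow> wt (Arr f) A B"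
| wt_Comp: "wt t1 A B \<Longrightarrow> wt t2 B C \<Longrightarrow> wt (Comp t1 t2) A C"
| wt_First: "wt t A B \<Longrightarrow> wt (First t) (TProd A C) (TProd B C)"
| wt_Get: "wt (Get (Ref B n)) A (TProd A B)"
| wt_Set: "wt (Set (Ref B n)) (TProd A B) A"

fun perm :: "'b val \<Rightarrow> 'b val" where
  "perm (VPair (VPair x y) z) = VPair (VPair x z) y"
| "perm v = v"  (* irrelevant on well-typed inputs *)

fun read_mem :: "'b resource \<Rightarrow> 'b memory \<Rightarrow> ('b val \<times> 'b memory) option" where
  "read_mem (Ref A n) \<sigma> =
     (case \<sigma> n of
        Some (Cell Internal A' (Some x)) \<Rightarrow> if A' = A then Some (x, \<sigma>) else None
      | Some (Cell (Input True) A' (Some x)) \<Rightarrow>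
          if A' = A then Some (x, \<sigma>(n \<mapsto> Cell (Input False) A None)) else None
      | _ \<Rightarrow> None)"

fun write_mem :: "'b resource \<Rightarrow> 'b memory \<Rightarrow> 'b val \<Rightarrow> 'b memory option" where
  "write_mem (Ref A n) \<sigma> v =
     (case \<sigma> n of
        Some (Cell Internal A' _) \<Rightarrow> if A' = A then Some (\<sigma>(n \<mapsto> Cell Internal A (Some v))) else None
      | Some (Cell (Output True) A' None) \<Rightarrow>
          if A' = A then Some (\<sigma>(n \<mapsto> Cell (Output False) A (Some v))) else None
      | _ \<Rightarrow> None)"

fun step :: "'b rsf \<Rightarrow> 'b val \<Rightarrow> 'b memory \<Rightarrow> ('b val \<times> 'b memory) option" where
  "step (Arr f) x \<sigma> = Some (f x, \<sigma>)"
| "step (Comp t1 t2) x \<sigma> =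
     (case step t1 x \<sigma> of None \<Rightarrow> None | Some (y, \<sigma>') \<Rightarrow> step t2 y \<sigma>')"
| "step (First t) xc \<sigma> =
     (case xc of
        VPair x c \<Rightarrow> (case step t x \<sigma> of None \<Rightarrow> None | Some (y, \<sigma>') \<Rightarrow> Some (VPair y c, \<sigma>'))
      | _ \<Rightarrow> None)"
| "step (Get r) x \<sigma> =
     (case read_mem r \<sigma> of None \<Rightarrow> None | Some (y, \<sigma>') \<Rightarrow> Some (VPair x y, \<sigma>'))"
| "step (Set r) xy \<sigma> =
     (case xy of
        VPair x y \<Rightarrow> (case write_mem r \<sigma> y of None \<Rightarrow> None | Some \<sigma>' \<Rightarrow> Some (x, \<sigma>'))
      | _ \<Rightarrow> None)"

definition equiv_rsf :: "'b ty \<Rightarrow> 'b rsf \<Rightarrow> 'b rsf \<Rightarrow> bool" where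
  "equiv_rsf A t t' \<longleftrightarrow> (\<forall>x \<sigma>. has_ty x A \<longrightarrow> wf_mem \<sigma> \<longrightarrow> step t x \<sigma> = step t' x \<sigma>)"

definition stack :: "nat \<Rightarrow> 'b rsf \<Rightarrow> 'b rsf" where
  "stack n t = (First ^^ n) t"

text \<open>perm_l(n,t) = stack(n-1,Arr perm) >>> ... >>> stack(0,Arr perm) >>> t (left-assoc)\<close>
definition perm_l :: "nat \<Rightarrow> 'b rsf \<Rightarrow> 'b rsf" where
  "perm_l n t = (case n of 0 \<Rightarrow> t
     | Suc m \<Rightarrow> foldl Comp (stack m (Arr perm))
                  (map (\<lambda>i. stack i (Arr perm)) (rev [0..<m]) @ [t]))"

definition perm_r :: "nat \<Rightarrow> 'b rsf \<Rightarrow> 'b rsf" where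
  "perm_r n t = foldl Comp t (map (\<lambda>i. stack i (Arr perm)) [0..<n])"

fun seqG :: "'b resource list \<Rightarrow> 'b rsf \<Rightarrow> 'b rsf" where
  "seqG [] t = t"
| "seqG (r # rs) t = Comp (Get r) (seqG rs t)"

text \<open>seqS(l,t) = t >>> Set l_{n-1} >>> ... >>> Set l0 (left-assoc)\<close>
definition seqS :: "'b resource list \<Rightarrow> 'b rsf \<Rightarrow> 'b rsf" where
  "seqS l t = foldl (\<lambda>acc r. Comp acc (Set r)) t (rev l)"

end

theory Submission
  imports Defs
begin

definition nest :: "'b val \<Rightarrow> 'b val list \<Rightarrow> 'b val" where
  "nest a ws = foldl VPair a ws"

lemma nest_Nil[simp]: "nest a [] = a" by (simp add: nest_def)
lemma nest_Cons[simp]: "nest a (w # ws) = nest (VPair a w) ws" by (simp add: nest_def)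
lemma nest_snoc[simp]: "nest a (ws @ [w]) = VPair (nest a ws) w" by (simp add: nest_def)

fun liftN :: "nat \<Rightarrow> ('b val \<Rightarrow> 'b val) \<Rightarrow> 'b val \<Rightarrow> 'b val option" where
  "liftN 0 f v = Some (f v)"
| "liftN (Suc i) f (VPair a b) = map_option (\<lambda>a'. VPair a' b) (liftN i f a)"
| "liftN (Suc i) f (Atom a) = None"

lemma stack_Suc: "stack (Suc i) t = First (stack i t)" by (simp add: stack_def)
lemma stack_0: "stack 0 t = t" by (simp add: stack_def)

lemma step_stack: "step (stack i (Arr f)) v \<sigma> = map_option (\<lambda>w. (w,\<sigma>)) (liftN i f v)"
proof (induction i arbitrary: v)
  case 0 then show ?case by (simp add: stack_0)
next
  case (Suc i) then show ?case
    by (cases v) (auto simp: stack_Suc split: option.splits)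
qed

lemma liftN_nest: "length ws = n \<Longrightarrow> liftN n f (nest a ws) = Some (nest (f a) ws)"
proof (induction ws arbitrary: n rule: rev_induct)
  case Nil then show ?case by simp
next
  case (snoc w ws) then show ?case by (cases n) auto
qed

fun PLs :: "nat list \<Rightarrow> 'b val \<Rightarrow> 'b val option" where
  "PLs [] v = Some v"
| "PLs (i # is) v = (case liftN i perm v of None \<Rightarrow> None | Some w \<Rightarrow> PLs is w)"

lemma PLs_append: "PLs (is @ js) v = (case PLs is v of None \<Rightarrow> None | Some w \<Rightarrow> PLs js w)"
  by (induction "is" arbitrary: v) (auto split: option.splits)

lemma step_foldl_stack:
  "step (foldl Comp u (map (\<lambda>i. stack i (Arr perm)) is @ ts)) x \<sigma> =
   (case step u x \<sigma> of None \<Rightarrow> None | Some (v,\<sigma>') \<Rightarrow>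
      (case PLs is v of None \<Rightarrow> None | Some w \<Rightarrow> step (foldl Comp (Arr id) ts) w \<sigma>'))"
proof (induction "is" arbitrary: u)
  case Nil
  show ?case
  proof (induction ts arbitrary: u rule: rev_induct)
    case Nil then show ?case by (auto split: option.splits)
  next
    case (snoc t ts) then show ?case by (auto split: option.splits)
  qed
next
  case (Cons i "is")
  show ?case using Cons[of "Comp u (stack i (Arr perm))"]
    by (auto simp: step_stack split: option.splits)
qed

lemma PLs_rev: "length ys = n \<Longrightarrow> PLs (rev [0..<n]) (nest (VPair x c) ys) = Some (VPair (nest x ys) c)"
proof (induction n arbitrary: x ys)
  case 0 then show ?case by simp
next
  case (Suc n)
  then obtain y ys' where ys: "ys = y # ys'" "length ys' = n" by (cases ys) auto
  have "liftN n perm (nest (VPair (VPair x c) y) ys') = Some (nest (VPair (VPair x y) c) ys')"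
    using liftN_nest[OF ys(2)] by simp
  then show ?case using Suc.IH[OF ys(2), of "VPair x y"] ys by simp
qed

lemma PLs_upt: "length ws2 = n \<Longrightarrow>
  PLs [0..<n] (VPair (nest z (ws1 @ ws2)) c) = Some (nest (VPair (nest z ws1) c) ws2)"
proof (induction n arbitrary: ws1 ws2)
  case 0 then show ?case by simp
next
  case (Suc n)
  then obtain w ws2' where ws: "ws2 = w # ws2'" "length ws2' = n" by (cases ws2) auto
  have IH: "PLs [0..<n] (VPair (nest z ((ws1 @ [w]) @ ws2')) c) = Some (nest (VPair (nest z (ws1@[w])) c) ws2')"
    using Suc.IH[OF ws(2)] .
  have "liftN n perm (nest (VPair (nest z (ws1@[w])) c) ws2') = Some (nest (VPair (VPair (nest z ws1) c) w) ws2')"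
    using liftN_nest[OF ws(2)] by simp
  then show ?case using IH ws by (simp add: PLs_append)
qed

lemma step_perm_l: assumes len: "length ys = n" shows "
  step (perm_l n t) (nest (VPair x c) ys) \<sigma> = step t (VPair (nest x ys) c) \<sigma>"
proof (cases n)
  case 0 then show ?thesis using len by (simp add: perm_l_def)
next
  case (Suc m)
  have "step (perm_l n t) (nest (VPair x c) ys) \<sigma> =
    (case PLs (m # rev [0..<m]) (nest (VPair x c) ys) of None \<Rightarrow> None | Some w \<Rightarrow> step t w \<sigma>)"
    unfolding perm_l_def Suc nat.case step_foldl_stack[of "stack m (Arr perm)" "rev [0..<m]" "[t]"]
    by (simp add: step_stack split: option.splits)
  also have "m # rev [0..<m] = rev [0..<n]" using Suc by simp
  finally show ?thesis using PLs_rev[OF len] by simp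
qed


lemma step_perm_r: "step (perm_r n u) x \<sigma> =
  (case step u x \<sigma> of None \<Rightarrow> None | Some (v,\<sigma>') \<Rightarrow> map_option (\<lambda>w. (w,\<sigma>')) (PLs [0..<n] v))"
  using step_foldl_stack[of u "[0..<n]" "[]"]
  by (auto simp: perm_r_def split: option.splits)

lemma has_ty_TProd: "has_ty x (TProd A B) \<longleftrightarrow> (\<exists>a b. x = VPair a b \<and> has_ty a A \<and> has_ty b B)"
  by (cases x) auto

lemma getc: assumes "wf_mem \<sigma>" "read_mem (Ref B n) \<sigma> = Some (y, \<sigma>')"
  shows "has_ty y B \<and> wf_mem \<sigma>'"
proof (cases "\<sigma> n")
  case None then show ?thesis using assms by simp
next
  case (Some c)
  obtain s \<tau> v where c: "c = Cell s \<tau> v" by (cases c)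
  show ?thesis
  proof (cases v)
    case None then show ?thesis using assms Some c by (cases s) (auto split: bool.splits)
  next
    case (Some x)
    have tx: "has_ty x \<tau>" using assms(1) \<open>\<sigma> n = Some c\<close> c Some unfolding wf_mem_def by blast
    show ?thesis
    proof (cases s)
      case Internal then show ?thesis using assms \<open>\<sigma> n = Some c\<close> c Some tx by (auto split: if_splits)
    next
      case (Input b) then show ?thesis using assms \<open>\<sigma> n = Some c\<close> c Some tx
        by (cases b) (auto split: if_splits simp: wf_mem_def)
    next
      case (Output b) then show ?thesis using assms \<open>\<sigma> n = Some c\<close> c Some tx by auto
    qed
  qed
qed

lemma setc: assumes "wf_mem \<sigma>" "write_mem (Ref B n) \<sigma> y = Some \<sigma>'" "has_ty y B"
  shows "wf_mem \<sigma>'"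
proof (cases "\<sigma> n")
  case None then show ?thesis using assms by simp
next
  case (Some c)
  obtain s \<tau> v where c: "c = Cell s \<tau> v" by (cases c)
  show ?thesis
  proof (cases s)
    case Internal then show ?thesis using assms Some c by (auto split: if_splits simp: wf_mem_def)
  next
    case (Input b) then show ?thesis using assms Some c by auto
  next
    case (Output b) then show ?thesis using assms Some c
      by (cases b; cases v) (auto split: if_splits simp: wf_mem_def)
  qed
qed

lemma subj: "wt t A B \<Longrightarrow> has_ty x A \<Longrightarrow> wf_mem \<sigma> \<Longrightarrow> step t x \<sigma> = Some (y,\<sigma>') \<Longrightarrow> has_ty y B \<and> wf_mem \<sigma>'"
proof (induction t A B arbitrary: x y \<sigma> \<sigma>' rule: wt.induct)
  case (wt_Arr A f B)
  from wt_Arr.prems(3) have "y = f x" "\<sigma>' = \<sigma>" by simp_all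
  then show ?case using wt_Arr.hyps[OF wt_Arr.prems(1)] wt_Arr.prems(2) by simp
next
  case (wt_Comp t1 A B t2 C)
  obtain m \<sigma>m where m: "step t1 x \<sigma> = Some (m, \<sigma>m)" "step t2 m \<sigma>m = Some (y, \<sigma>')"
    using wt_Comp.prems(3) by (auto split: option.splits)
  have "has_ty m B \<and> wf_mem \<sigma>m" using wt_Comp.IH(1)[OF wt_Comp.prems(1,2) m(1)] .
  then show ?case using wt_Comp.IH(2)[OF _ _ m(2)] by blast
next
  case (wt_First t A B C)
  obtain a c where x: "x = VPair a c" "has_ty a A" "has_ty c C"
    using wt_First.prems(1) by (auto simp: has_ty_TProd)
  obtain b where b: "step t a \<sigma> = Some (b, \<sigma>')" "y = VPair b c"
    using wt_First.prems(3) x(1) by (auto split: option.splits)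
  have "has_ty b B \<and> wf_mem \<sigma>'" using wt_First.IH[OF x(2) wt_First.prems(2) b(1)] .
  then show ?case using b(2) x(3) by simp
next
  case (wt_Get B n A)
  then obtain z where "read_mem (Ref B n) \<sigma> = Some (z, \<sigma>')" "y = VPair x z"
    by (auto split: option.splits)
  then show ?case using getc[of \<sigma> B n z \<sigma>'] wt_Get.prems by auto
next
  case (wt_Set B n A)
  then obtain a b where x: "x = VPair a b" "has_ty a A" "has_ty b B" by (auto simp: has_ty_TProd)
  then obtain \<sigma>1 where "write_mem (Ref B n) \<sigma> b = Some \<sigma>1" "y = a" "\<sigma>' = \<sigma>1"
    using wt_Set.prems by (auto split: option.splits)
  then show ?case using setc[of \<sigma> B n b \<sigma>1] wt_Set.prems x by auto
qed

lemma seqS_Cons: "seqS (r#l) t = Comp (seqS l t) (Set r)" by (simp add: seqS_def)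

inductive_cases wtCompE: "wt (Comp t1 t2) A B"
inductive_cases wtSetE: "wt (Set r) A B"

lemma wt_seqS: "wt (seqS l t) A B \<Longrightarrow> \<exists>T0. wt t A T0 \<and>
   (\<forall>v. has_ty v T0 \<longrightarrow> (\<exists>z ws. v = nest z ws \<and> length ws = length l \<and> has_ty z B))"
proof (induction l arbitrary: B)
  case Nil
  then have "wt t A B" by (simp add: seqS_def)
  moreover have "\<forall>v. has_ty v B \<longrightarrow> (\<exists>z ws. v = nest z ws \<and> length ws = length ([]::'b resource list) \<and> has_ty z B)"
    by (metis list.size(3) nest_Nil)
  ultimately show ?case by blast
next
  case (Cons r l)
  from Cons.prems obtain M where M: "wt (seqS l t) A M" "wt (Set r) M B"
    unfolding seqS_Cons by (auto elim: wtCompE)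
  from M(2) obtain Br where MB: "M = TProd B Br" by (auto elim: wtSetE)
  from Cons.IH[OF M(1)] obtain T0 where T0: "wt t A T0"
    "\<forall>v. has_ty v T0 \<longrightarrow> (\<exists>z ws. v = nest z ws \<and> length ws = length l \<and> has_ty z M)" by blast
  show ?case
  proof (rule exI[of _ T0], intro conjI allI impI)
    show "wt t A T0" by fact
    fix v assume "has_ty v T0"
    then obtain z ws where z: "v = nest z ws" "length ws = length l" "has_ty z M" using T0 by blast
    then obtain z' w where "z = VPair z' w" "has_ty z' B" using MB by (auto simp: has_ty_TProd)
    then show "\<exists>z ws. v = nest z ws \<and> length ws = length (r # l) \<and> has_ty z B"
      using z by (intro exI[of _ z'] exI[of _ "w # ws"]) auto
  qed
qed

lemma step_seqS: "step (seqS l u) x \<sigma> =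
  (case step u x \<sigma> of None \<Rightarrow> None | Some (v,\<sigma>') \<Rightarrow> step (seqS l (Arr id)) v \<sigma>')"
  by (induction l arbitrary: x \<sigma>) (auto simp: seqS_Cons seqS_def split: option.splits)

lemma seqS_indep0: "length ws = length l \<Longrightarrow> (step (seqS l (Arr id)) (nest a ws) \<sigma> =
   map_option (\<lambda>p. (a, snd p)) (step (seqS l (Arr id)) (nest b ws) \<sigma>)) \<and>
   (\<forall>p. step (seqS l (Arr id)) (nest a ws) \<sigma> = Some p \<longrightarrow> fst p = a)"
proof (induction l arbitrary: a b ws)
  case Nil then show ?case by (simp add: seqS_def)
next
  case (Cons r l)
  then obtain w ws' where ws: "ws = w # ws'" "length ws' = length l" by (cases ws) auto
  have IH: "step (seqS l (Arr id)) (nest (VPair a w) ws') \<sigma> =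
   map_option (\<lambda>p. (VPair a w, snd p)) (step (seqS l (Arr id)) (nest (VPair b w) ws') \<sigma>)"
    "\<forall>p. step (seqS l (Arr id)) (nest (VPair b w) ws') \<sigma> = Some p \<longrightarrow> fst p = VPair b w"
    using Cons.IH[OF ws(2)] by blast+
  show ?case unfolding ws nest_Cons seqS_Cons step.simps IH(1) using IH(2)
    by (cases "step (seqS l (Arr id)) (nest (VPair b w) ws') \<sigma>") (auto split: option.splits)
qed

lemma seqS_indep: assumes "length ws = length l" shows "step (seqS l (Arr id)) (nest a ws) \<sigma> =
   map_option (\<lambda>p. (a, snd p)) (step (seqS l (Arr id)) (nest b ws) \<sigma>)"
  using conjunct1[OF seqS_indep0[OF assms]] .

fun RD :: "'b resource list \<Rightarrow> 'b memory \<Rightarrow> ('b val list \<times> 'b memory) option" where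
  "RD [] \<sigma> = Some ([], \<sigma>)"
| "RD (r # l) \<sigma> = (case read_mem r \<sigma> of None \<Rightarrow> None | Some (y,\<sigma>1) \<Rightarrow>
     (case RD l \<sigma>1 of None \<Rightarrow> None | Some (ys,\<sigma>2) \<Rightarrow> Some (y # ys, \<sigma>2)))"

lemma step_seqG: "step (seqG l u) x \<sigma> = (case RD l \<sigma> of None \<Rightarrow> None | Some (ys,\<sigma>') \<Rightarrow> step u (nest x ys) \<sigma>')"
  by (induction l arbitrary: x \<sigma>) (auto split: option.splits)

lemma RD_len: "RD l \<sigma> = Some (ys,\<sigma>') \<Longrightarrow> length ys = length l"
  by (induction l arbitrary: \<sigma> ys \<sigma>') (auto split: option.splits)

theorem lemma8:
  fixes t :: "'b rsf" and l :: "'b resource list" and A B C :: "'b ty"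
  shows "(wt (seqG l t) A B \<longrightarrow>
            equiv_rsf (TProd A C) (First (seqG l t)) (seqG l (perm_l (length l) (First t))))
       \<and> (wt (seqS l t) A B \<longrightarrow>
            equiv_rsf (TProd A C) (First (seqS l t)) (seqS l (perm_r (length l) (First t))))"
proof (intro conjI impI)
  show "equiv_rsf (TProd A C) (First (seqG l t)) (seqG l (perm_l (length l) (First t)))"
    unfolding equiv_rsf_def
  proof (intro allI impI)
    fix x and \<sigma> :: "'b memory" assume "has_ty x (TProd A C)"
    then obtain a c where x: "x = VPair a c" by (auto simp: has_ty_TProd)
    show "step (First (seqG l t)) x \<sigma> = step (seqG l (perm_l (length l) (First t))) x \<sigma>"
    proof (cases "RD l \<sigma>")
      case None then show ?thesis unfolding x
        by (simp add: step_seqG[of l t] step_seqG[of l "perm_l (length l) (First t)"])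
    next
      case (Some q)
      then obtain ys \<sigma>1 where q: "RD l \<sigma> = Some (ys, \<sigma>1)" by (cases q) auto
      have len: "length ys = length l" using RD_len[OF q] .
      show ?thesis unfolding x
        by (simp add: step_seqG[of l t] step_seqG[of l "perm_l (length l) (First t)"] q step_perm_l[OF len])
    qed
  qed
next
  assume wt: "wt (seqS l t) A B"
  from wt_seqS[OF wt] obtain T0 where T0: "wt t A T0"
    "\<forall>v. has_ty v T0 \<longrightarrow> (\<exists>z ws. v = nest z ws \<and> length ws = length l \<and> has_ty z B)" by blast
  show "equiv_rsf (TProd A C) (First (seqS l t)) (seqS l (perm_r (length l) (First t)))"
    unfolding equiv_rsf_def
  proof (intro allI impI)
    fix x and \<sigma> :: "'b memory" assume xt: "has_ty x (TProd A C)" and wf: "wf_mem \<sigma>"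
    then obtain a c where x: "x = VPair a c" and a: "has_ty a A" by (auto simp: has_ty_TProd)
    show "step (First (seqS l t)) x \<sigma> = step (seqS l (perm_r (length l) (First t))) x \<sigma>"
    proof (cases "step t a \<sigma>")
      case None then show ?thesis unfolding x
        by (simp add: step_perm_r step_seqS[of l t] step_seqS[of l "perm_r (length l) (First t)"])
    next
      case (Some p)
      then obtain T \<sigma>1 where p: "step t a \<sigma> = Some (T, \<sigma>1)" by (cases p) auto
      have "has_ty T T0" using conjunct1[OF subj[OF T0(1) a wf p]] .
      then obtain z ws where
        T: "T = nest z ws" "length ws = length l" using T0(2) by blast
      have P: "PLs [0..<length l] (VPair (nest z ws) c) = Some (nest (VPair z c) ws)"
        using PLs_upt[OF T(2), of z "[]" c] by simp
      have I1: "step (seqS l (Arr id)) (nest (VPair z c) ws) \<sigma>1 =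
          map_option (\<lambda>p. (VPair z c, snd p)) (step (seqS l (Arr id)) (nest z ws) \<sigma>1)"
        using seqS_indep[OF T(2)] .
      have I2: "step (seqS l (Arr id)) (nest z ws) \<sigma>1 =
          map_option (\<lambda>p. (z, snd p)) (step (seqS l (Arr id)) (nest z ws) \<sigma>1)"
        using seqS_indep[OF T(2)] .
      have L: "step (First (seqS l t)) (VPair a c) \<sigma> =
          map_option (\<lambda>p. (VPair (fst p) c, snd p)) (step (seqS l (Arr id)) T \<sigma>1)"
        by (simp add: step_seqS[of l t] p split: option.splits)
      have R: "step (seqS l (perm_r (length l) (First t))) (VPair a c) \<sigma> =
          step (seqS l (Arr id)) (nest (VPair z c) ws) \<sigma>1"
        unfolding step_seqS[of l "perm_r (length l) (First t)"] step_perm_r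
        by (simp add: p P T(1))
      show ?thesis unfolding x L R I1 T(1)
        by (subst I2) (simp add: option.map_comp comp_def)
    qed
  qed
qed

end
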